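(* Let $n\ge 4$, $x_1,\dots,x_{n-1}>0$, $\gamma,\delta>0$ with $\gamma\ne1$, $\delta\ne1$, and set $x_0=1$. Let $\mathbf{P}=[p_{ij}]\in\mathbb{R}^{n\times n}$ be given by $p_{ij}=x_{j-1}/x_{i-1}$ for all $i,j$, except $p_{12}=\delta x_1$, $p_{21}=1/(\delta x_1)$, $p_{13}=\gamma x_2$, $p_{31}=1/(\gamma x_2)$. Then the characteristic polynomial of $\mathbf{P}$ is $$p_{\mathbf{P}}(\lambda)=\det(\mathbf{P}-\lambda\mathbf{I})=(-1)^n\lambda^{n-3}\left(\lambda^3-n\lambda^2-\left(\frac{\gamma}{\delta}+\frac{\delta}{\gamma}\right)-(n-3)\left(\gamma+\delta+\frac1\gamma+\frac1\delta\right)+4n-10\right).$$ *)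

theory Defs
  imports "Jordan_Normal_Form.Determinant"
begin

text \<open>The perturbed pairwise comparison matrix P (0-based indices; paper index i
 corresponds to row i-1). Here x 0 is replaced by 1 (the convention x_0 = 1).\<close>
definition pert_pcm :: "nat \<Rightarrow> (nat \<Rightarrow> real) \<Rightarrow> real \<Rightarrow> real \<Rightarrow> real mat" where
  "pert_pcm n x \<gamma> \<delta> =
     (let y = (\<lambda>k. if k = 0 then 1 else x k) in
      mat n n (\<lambda>(i, j).
        if i = 0 \<and> j = 1 then \<delta> * x 1
        else if i = 1 \<and> j = 0 then 1 / (\<delta> * x 1)
        else if i = 0 \<and> j = 2 then \<gamma> * x 2
        else if i = 2 \<and> j = 0 then 1 / (\<gamma> * x 2)
        else y j / y i))"

end

theory Submission
  imports Defs
begin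
lemma det0: "A \<in> carrier_mat 0 0 \<Longrightarrow> det A = (1::'a::comm_ring_1)"
  by (simp add: det_def')
lemma det1: "A \<in> carrier_mat 1 1 \<Longrightarrow> det A = (A $$ (0,0)::'a::comm_ring_1)"
proof -
  assume A: "A \<in> carrier_mat 1 1"
  have "mat_delete A 0 0 \<in> carrier_mat 0 0" using mat_delete_carrier[OF A] by simp
  then show ?thesis by (subst laplace_expansion_row[OF A, of 0], auto simp: cofactor_def det0)
qed
lemma det2: "A \<in> carrier_mat 2 2 \<Longrightarrow> det A = (A $$ (0,0) * A $$ (1,1) - A $$ (0,1) * A $$ (1,0)::'a::comm_ring_1)"
  apply (subst laplace_expansion_row[of A 2 0], auto simp: cofactor_def numeral_2_eq_2)
  apply (subst (1 2) det1, auto simp: mat_delete_def)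
  done
lemma det3: "A \<in> carrier_mat 3 3 \<Longrightarrow> det A = (A $$ (0,0) * (A $$ (1,1) * A $$ (2,2) - A $$ (1,2) * A $$ (2,1))
  - A $$ (0,1) * (A $$ (1,0) * A $$ (2,2) - A $$ (1,2) * A $$ (2,0))
  + A $$ (0,2) * (A $$ (1,0) * A $$ (2,1) - A $$ (1,1) * A $$ (2,0)) ::'a::comm_ring_1)"
  apply (subst laplace_expansion_row[of A 3 0], auto simp: cofactor_def numeral_3_eq_3)
  apply (subst (1 2 3) det2, auto simp: mat_delete_def numeral_2_eq_2)
  done


lemma det4: "A \<in> carrier_mat 4 4 \<Longrightarrow> det A = (A $$ (0,0) * (A $$ (1,1) * (A $$ (2,2) * A $$ (3,3) - A $$ (2,3) * A $$ (3,2)) - A $$ (1,2) * (A $$ (2,1) * A $$ (3,3) - A $$ (2,3) * A $$ (3,1)) + A $$ (1,3) * (A $$ (2,1) * A $$ (3,2) - A $$ (2,2) * A $$ (3,1))) - A $$ (0,1) * (A $$ (1,0) * (A $$ (2,2) * A $$ (3,3) - A $$ (2,3) * A $$ (3,2)) - A $$ (1,2) * (A $$ (2,0) * A $$ (3,3) - A $$ (2,3) * A $$ (3,0)) + A $$ (1,3) * (A $$ (2,0) * A $$ (3,2) - A $$ (2,2) * A $$ (3,0))) + A $$ (0,2) * (A $$ (1,0) * (A $$ (2,1) * A $$ (3,3) - A $$ (2,3) * A $$ (3,1)) - A $$ (1,1) * (A $$ (2,0) * A $$ (3,3) - A $$ (2,3) * A $$ (3,0)) + A $$ (1,3) * (A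 $$ (2,0) * A $$ (3,1) - A $$ (2,1) * A $$ (3,0))) - A $$ (0,3) * (A $$ (1,0) * (A $$ (2,1) * A $$ (3,2) - A $$ (2,2) * A $$ (3,1)) - A $$ (1,1) * (A $$ (2,0) * A $$ (3,2) - A $$ (2,2) * A $$ (3,0)) + A $$ (1,2) * (A $$ (2,0) * A $$ (3,1) - A $$ (2,1) * A $$ (3,0))) ::'a::comm_ring_1)"
proof -
  assume A: "A \<in> carrier_mat 4 4"
  have C: "\<And>j. mat_delete A 0 j \<in> carrier_mat 3 3" using mat_delete_carrier[OF A] by simp
  have "det A = (\<Sum>j<4. A $$ (0,j) * cofactor A 0 j)" by (rule laplace_expansion_row[OF A], simp)
  also have "\<dots> = A $$ (0,0) * cofactor A 0 0 + A $$ (0,1) * cofactor A 0 1 + A $$ (0,2) * cofactor A 0 2 + A $$ (0,3) * cofactor A 0 3"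
    by (simp add: numeral_3_eq_3 numeral_Bit0 eval_nat_numeral)
  finally show ?thesis unfolding cofactor_def det3[OF C] using A by (simp add: mat_delete_def eval_nat_numeral algebra_simps)
qed

lemma alg4:
  fixes a d g t :: real assumes d: "d \<noteq> 0" and g: "g \<noteq> 0"
  shows "(1-t) * ((1-t) * ((1-t) * (a-t) - a * 1) - 1 * (1 * (a-t) - a * 1) + a * (1 * 1 - (1-t) * 1)) - d * ((1/d) * ((1-t) * (a-t) - a * 1) - 1 * ((1/g) * (a-t) - a * 1) + a * ((1/g) * 1 - (1-t) * 1)) + g * ((1/d) * (1 * (a-t) - a * 1) - (1-t) * ((1/g) * (a-t) - a * 1) + a * ((1/g) * 1 - 1 * 1)) - a * ((1/d) * (1 * 1 - (1-t) * 1) - (1-t) * ((1/g) * 1 - (1-t) * 1) + 1 * ((1/g) * 1 - 1 * 1))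
   = t * (t ^ 3 - (a+3) * t ^ 2 - (g / d + d / g) - a * (g + d + 1 / g + 1 / d) + 4 * (a+3) - 10)"
  using d g by (simp add: field_simps) (simp add: algebra_simps power2_eq_square power3_eq_cube)

theorem theorem3:
  fixes n :: nat and x :: "nat \<Rightarrow> real" and \<gamma> \<delta> t :: real
  assumes "n \<ge> 4"
    and "\<And>k. 1 \<le> k \<Longrightarrow> k \<le> n - 1 \<Longrightarrow> x k > 0"
    and "\<gamma> > 0" and "\<delta> > 0" and "\<gamma> \<noteq> 1" and "\<delta> \<noteq> 1"
  shows "det (pert_pcm n x \<gamma> \<delta> - t \<cdot>\<^sub>m 1\<^sub>m n) =
    (-1) ^ n * t ^ (n - 3) *
      (t ^ 3 - real n * t ^ 2 - (\<gamma> / \<delta> + \<delta> / \<gamma>)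
       - (real n - 3) * (\<gamma> + \<delta> + 1 / \<gamma> + 1 / \<delta>) + 4 * real n - 10)"
proof -
  note n = assms(1)
  have x1: "x 1 > 0" and x2: "x 2 > 0" using assms(2)[of 1] assms(2)[of 2] n by auto
  have g: "\<gamma> \<noteq> 0" and d: "\<delta> \<noteq> 0" using assms by auto
  define M where "M = pert_pcm n x \<gamma> \<delta> - t \<cdot>\<^sub>m 1\<^sub>m n"
  have M: "M \<in> carrier_mat n n" unfolding M_def pert_pcm_def by auto
  define y where "y = (\<lambda>i. if i = 0 then 1 else if i < n then x i else (1::real))"
  have ypos: "y i > 0" for i using assms(2)[of i] unfolding y_def by auto
  define c where "c = (\<lambda>(i::nat) (j::nat). if i = 0 \<and> j = 1 then \<delta> else if i = 1 \<and> j = 0 then 1/\<delta>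
      else if i = 0 \<and> j = 2 then \<gamma> else if i = 2 \<and> j = 0 then 1/\<gamma> else (1::real))"
  define Q where "Q = mat n n (\<lambda>(i,j). c i j - (if i = j then t else 0))"
  have Q: "Q \<in> carrier_mat n n" unfolding Q_def by auto
  have DMD: "mat_diag n y * M * mat_diag n (\<lambda>i. 1 / y i) = Q"
  proof -
    have "mat_diag n y * M * mat_diag n (\<lambda>i. 1 / y i) = mat n n (\<lambda>(i,j). y i * M $$ (i,j) * (1 / y j))"
      by (simp add: mat_diag_mult_left[OF M] mat_diag_mult_right[OF mat_carrier], rule eq_matI, auto)
    also have "\<dots> = Q"
    proof (rule eq_matI)
      fix i j assume i: "i < dim_row Q" and j: "j < dim_col Q"
      hence i: "i < n" and j: "j < n" using Q by auto
      have yi: "y i \<noteq> 0" "y j \<noteq> 0" using ypos[of i] ypos[of j] by auto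
      show "mat n n (\<lambda>(i,j). y i * M $$ (i,j) * (1 / y j)) $$ (i,j) = Q $$ (i,j)"
        using i j n x1 x2 yi g d unfolding Q_def M_def pert_pcm_def c_def Let_def
        by (auto simp: y_def field_simps)
    qed (insert Q, auto)
    finally show ?thesis .
  qed
  have detQ: "det Q = det M"
  proof -
    have "det Q = det (mat_diag n y) * det M * det (mat_diag n (\<lambda>i. 1 / y i))"
      unfolding DMD[symmetric] by (simp add: det_mult[OF mult_carrier_mat[OF mat_diag_dim M] mat_diag_dim] det_mult[OF mat_diag_dim M])
    moreover have "det (mat_diag n y) * det (mat_diag n (\<lambda>i. 1 / y i)) = 1"
    proof -
      have "(\<lambda>i. y i * (1 / y i)) = (\<lambda>i. 1)" using ypos by (metis less_irrefl nonzero_mult_div_cancel_left div_by_1 times_divide_eq_right)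
      hence "mat_diag n y * mat_diag n (\<lambda>i. 1 / y i) = 1\<^sub>m n" by simp
      thus ?thesis using det_mult[OF mat_diag_dim mat_diag_dim, of n y "\<lambda>i. 1 / y i"] by simp
    qed
    ultimately show ?thesis by (simp add: mult_ac)
  qed
  define L where "L = mat n n (\<lambda>(i,j). if i = j then 1 else if 4 \<le> i \<and> j = 3 then -1 else (0::real))"
  define R where "R = mat n n (\<lambda>(i,j). if i = j then 1 else if 4 \<le> i \<and> j = 3 then 1 else (0::real))"
  have L: "L \<in> carrier_mat n n" and R: "R \<in> carrier_mat n n" unfolding L_def R_def by auto
  have detL: "det L = 1"
  proof -
    have "map (\<lambda>i. L $$ (i, i)) [0..<n] = map (\<lambda>i. 1) [0..<n]" by (rule map_cong, auto simp: L_def)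
    thus ?thesis using L by (subst det_lower_triangular[OF _ L], auto simp: L_def diag_mat_def map_replicate_const)
  qed
  have detR: "det R = 1"
  proof -
    have "map (\<lambda>i. R $$ (i, i)) [0..<n] = map (\<lambda>i. 1) [0..<n]" by (rule map_cong, auto simp: R_def)
    thus ?thesis using R by (subst det_lower_triangular[OF _ R], auto simp: R_def diag_mat_def map_replicate_const)
  qed
  define LQ where "LQ = mat n n (\<lambda>(i,j). Q $$ (i,j) - (if 4 \<le> i then Q $$ (3,j) else 0))"
  have LQ: "LQ \<in> carrier_mat n n" unfolding LQ_def by auto
  have LQ_eq: "L * Q = LQ"
  proof (rule eq_matI)
    fix i j assume "i < dim_row LQ" "j < dim_col LQ"
    hence i: "i < n" and j: "j < n" using LQ by auto
    have "(L * Q) $$ (i,j) = (\<Sum>k\<in>{0..<n}. L $$ (i,k) * Q $$ (k,j))"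
      using i j L Q by (simp add: scalar_prod_def)
    also have "\<dots> = (\<Sum>k\<in>{0..<n}. (if k = i then Q $$ (i,j) else 0) + (if k = 3 then (if 4 \<le> i then - Q $$ (3,j) else 0) else 0))"
      using i by (intro sum.cong, auto simp: L_def)
    also have "\<dots> = LQ $$ (i,j)"
      using i j n by (simp add: sum.distrib LQ_def)
    finally show "(L * Q) $$ (i,j) = LQ $$ (i,j)" .
  qed (insert L Q LQ, auto)
  define K where "K = mat 4 4 (\<lambda>(i,j). c i j - (if i = j then t else 0) + (if j = 3 then real n - 4 else 0))"
  define N where "N = four_block_mat K (mat 4 (n-4) (\<lambda>_. 1)) (0\<^sub>m (n-4) 4) ((-t) \<cdot>\<^sub>m 1\<^sub>m (n-4))"
  have Ndim: "N \<in> carrier_mat n n" unfolding N_def K_def using n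
    by (metis (no_types, lifting) four_block_carrier_mat le_add_diff_inverse mat_carrier one_carrier_mat smult_carrier_mat)
  have S: "(\<Sum>k\<in>{4..<n}. LQ $$ (i,k)) = (if i < 4 then real n - 4 else -t)" if i: "i < n" for i
  proof (cases "i < 4")
    case True
    have "(\<Sum>k\<in>{4..<n}. LQ $$ (i,k)) = (\<Sum>k\<in>{4..<n}. 1)"
      using True i by (intro sum.cong, auto simp: LQ_def Q_def c_def)
    thus ?thesis using True n by simp
  next
    case False
    have "(\<Sum>k\<in>{4..<n}. LQ $$ (i,k)) = (\<Sum>k\<in>{4..<n}. if k = i then -t else 0)"
      using False i n by (intro sum.cong, auto simp: LQ_def Q_def c_def)
    thus ?thesis using False i by simp
  qed
  have N_eq: "LQ * R = N"
  proof (rule eq_matI)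
    fix i j assume "i < dim_row N" "j < dim_col N"
    hence i: "i < n" and j: "j < n" using Ndim by auto
    have "(LQ * R) $$ (i,j) = (\<Sum>k\<in>{0..<n}. LQ $$ (i,k) * R $$ (k,j))"
      using i j LQ R by (simp add: scalar_prod_def)
    also have "\<dots> = (\<Sum>k\<in>{0..<n}. (if k = j then LQ $$ (i,j) else 0) + (if 4 \<le> k then (if j = 3 then LQ $$ (i,k) else 0) else 0))"
      using j by (intro sum.cong, auto simp: R_def)
    also have "\<dots> = LQ $$ (i,j) + (\<Sum>k\<in>{0..<n}. if 4 \<le> k then (if j = 3 then LQ $$ (i,k) else 0) else 0)"
      using j by (simp add: sum.distrib)
    also have "(\<Sum>k\<in>{0..<n}. if 4 \<le> k then (if j = 3 then LQ $$ (i,k) else 0) else 0)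
       = (\<Sum>k\<in>{k\<in>{0..<n}. 4 \<le> k}. if j = 3 then LQ $$ (i,k) else 0)"
      by (rule sum.inter_filter[symmetric], simp)
    also have "{k\<in>{0..<n}. 4 \<le> k} = {4..<n}" by auto
    also have "(\<Sum>k\<in>{4..<n}. if j = 3 then LQ $$ (i,k) else 0) = (if j = 3 then (if i < 4 then real n - 4 else -t) else 0)"
      using S[OF i] by simp
    also have "LQ $$ (i,j) + (if j = 3 then (if i < 4 then real n - 4 else -t) else 0) = N $$ (i,j)"
      using i j n unfolding N_def LQ_def Q_def K_def c_def by (auto simp: index_mat_four_block)
    finally show "(LQ * R) $$ (i,j) = N $$ (i,j)" .
  qed (insert LQ R Ndim, auto)
  have detN: "det N = det K * (-t)^(n-4)"
    unfolding N_def by (subst det_four_block_mat_lower_left_zero[of _ 4 _ "n-4"], auto simp: K_def)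
  have detK: "det K = t * (t ^ 3 - real n * t ^ 2 - (\<gamma> / \<delta> + \<delta> / \<gamma>)
       - (real n - 3) * (\<gamma> + \<delta> + 1 / \<gamma> + 1 / \<delta>) + 4 * real n - 10)"
  proof -
    have KC: "K \<in> carrier_mat 4 4" unfolding K_def by simp
    have e00: "K $$ (0,0) = 1 - t" by (simp add: K_def c_def)
    have e01: "K $$ (0,1) = \<delta>" by (simp add: K_def c_def)
    have e02: "K $$ (0,2) = \<gamma>" by (simp add: K_def c_def)
    have e03: "K $$ (0,3) = real n - 3" by (simp add: K_def c_def)
    have e10: "K $$ (1,0) = 1 / \<delta>" by (simp add: K_def c_def)
    have e11: "K $$ (1,1) = 1 - t" by (simp add: K_def c_def)
    have e12: "K $$ (1,2) = 1" by (simp add: K_def c_def)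
    have e13: "K $$ (1,3) = real n - 3" by (simp add: K_def c_def)
    have e20: "K $$ (2,0) = 1 / \<gamma>" by (simp add: K_def c_def)
    have e21: "K $$ (2,1) = 1" by (simp add: K_def c_def)
    have e22: "K $$ (2,2) = 1 - t" by (simp add: K_def c_def)
    have e23: "K $$ (2,3) = real n - 3" by (simp add: K_def c_def)
    have e30: "K $$ (3,0) = 1" by (simp add: K_def c_def)
    have e31: "K $$ (3,1) = 1" by (simp add: K_def c_def)
    have e32: "K $$ (3,2) = 1" by (simp add: K_def c_def)
    have e33: "K $$ (3,3) = real n - 3 - t" by (simp add: K_def c_def)
    note E = e00 e01 e02 e03 e10 e11 e12 e13 e20 e21 e22 e23 e30 e31 e32 e33
    have "det K = t * (t ^ 3 - (real n - 3 + 3) * t ^ 2 - (\<gamma> / \<delta> + \<delta> / \<gamma>) - (real n - 3) * (\<gamma> + \<delta> + 1 / \<gamma> + 1 / \<delta>) + 4 * (real n - 3 + 3) - 10)"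
      unfolding det4[OF KC] by (simp only: E alg4[OF d g])
    thus ?thesis by simp
  qed
  have "det N = det L * det Q * det R"
    using det_mult[OF mult_carrier_mat[OF L Q] R] det_mult[OF L Q] LQ_eq N_eq by simp
  hence "det M = det K * (-t)^(n-4)" using detL detR detQ detN by simp
  also have "\<dots> = (-1) ^ n * t ^ (n - 3) *
      (t ^ 3 - real n * t ^ 2 - (\<gamma> / \<delta> + \<delta> / \<gamma>)
       - (real n - 3) * (\<gamma> + \<delta> + 1 / \<gamma> + 1 / \<delta>) + 4 * real n - 10)"
  proof -
    have e1: "(-t)^(n-4) = (-1)^(n-4) * t^(n-4)" by (rule power_minus)
    have "(-1::real)^n = (-1)^(n-4) * (-1)^4" unfolding power_add[symmetric] using n by simp
    hence e2: "(-1::real)^n = (-1)^(n-4)" by simp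
    have "n - 3 = Suc (n - 4)" using n by simp
    hence e3: "t^(n-3) = t * t^(n-4)" by simp
    show ?thesis unfolding detK e1 e2 e3 by (simp only: mult_ac)
  qed
  finally show ?thesis unfolding M_def .
qed
end
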